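(* Let $G$ be a graph and $m\geq 1$. Suppose $E(G)$ is partitioned into the edge set of a DVOP$[k']$ in $G$ and a complementary edge set $E'$, and also $E(G)$ is partitioned into the edge set of a DVOP$[k'']$ in $G$ and a complementary edge set $E''$. Then $E(m\#G)$ can be partitioned into the edge sets of $|V(G)|$ paths each isomorphic to $P_{k'+m+k''}$, together with the copy of $E'$ in $G'$ and the copy of $E''$ in $G''$.
   Context: $P_k$ is the path with vertices $0,1,\dots,k$ and edges $\hat{j}$ joining $j-1$ and $j$. For a graph $G$, a DVOP$[k]$ is a family $\{p_v\}_{v\in V(G)}$ of embeddings $p_v:P_k\to G$ such that (a) $p_v(\hat{j})=p_{v'}(\hat{j'})$ implies $v=v'$ and $j=j'$, and (b) $p_v(0)=v$ for every $v$; its edge set is the union of the edge images of all $p_v$. For a graph $G$ and $m\geq 1$, $m\#G$ is the graph obtained by taking two disjoint copies $G'$ and $G''$ of $G$ and joining each vertex $v'\in V(G')$ to the corresponding vertex $v''\in V(G'')$ by a path with $m$ edges, these new paths being internally vertex-disjoint from each other and from $G'\cup G''$. *)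

theory Defs
  imports Main
begin

definition simple_graph :: "'a set \<Rightarrow> 'a set set \<Rightarrow> bool" where
  "simple_graph V E \<longleftrightarrow> (\<forall>e\<in>E. \<exists>u v. e = {u, v} \<and> u \<in> V \<and> v \<in> V \<and> u \<noteq> v)"

definition path_embedding :: "'a set \<Rightarrow> 'a set set \<Rightarrow> nat \<Rightarrow> (nat \<Rightarrow> 'a) \<Rightarrow> bool" where
  "path_embedding V E k p \<longleftrightarrow> inj_on p {0..k} \<and> (\<forall>i\<in>{0..k}. p i \<in> V)
     \<and> (\<forall>j\<in>{1..k}. {p (j - 1), p j} \<in> E)"

definition path_edge :: "(nat \<Rightarrow> 'a) \<Rightarrow> nat \<Rightarrow> 'a set" where
  "path_edge p j = {p (j - 1), p j}"

definition path_edges :: "(nat \<Rightarrow> 'a) \<Rightarrow> nat \<Rightarrow> 'a set set" where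
  "path_edges p k = path_edge p ` {1..k}"

definition dvop :: "'a set \<Rightarrow> 'a set set \<Rightarrow> nat \<Rightarrow> ('a \<Rightarrow> nat \<Rightarrow> 'a) \<Rightarrow> bool" where
  "dvop V E k P \<longleftrightarrow>
     (\<forall>v\<in>V. path_embedding V E k (P v) \<and> P v 0 = v) \<and>
     (\<forall>v\<in>V. \<forall>v'\<in>V. \<forall>j\<in>{1..k}. \<forall>j'\<in>{1..k}.
        path_edge (P v) j = path_edge (P v') j' \<longrightarrow> v = v' \<and> j = j')"

definition dvop_edges :: "'a set \<Rightarrow> nat \<Rightarrow> ('a \<Rightarrow> nat \<Rightarrow> 'a) \<Rightarrow> 'a set set" where
  "dvop_edges V k P = (\<Union>v\<in>V. path_edges (P v) k)"

text \<open>Vertices of m#G: L v (copy in G'), R v (copy in G''), Mid v i (internal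
vertex i, 0 < i < m, of the connecting path of v).\<close>
datatype 'a sharp_vert = L 'a | R 'a | Mid 'a nat

definition sharp_walk :: "nat \<Rightarrow> 'a \<Rightarrow> nat \<Rightarrow> 'a sharp_vert" where
  "sharp_walk m v i = (if i = 0 then L v else if i = m then R v else Mid v i)"

definition sharp_verts :: "'a set \<Rightarrow> nat \<Rightarrow> 'a sharp_vert set" where
  "sharp_verts V m = L ` V \<union> R ` V \<union> {Mid v i | v i. v \<in> V \<and> 0 < i \<and> i < m}"

definition copyL :: "'a set set \<Rightarrow> 'a sharp_vert set set" where
  "copyL F = (\<lambda>e. L ` e) ` F"

definition copyR :: "'a set set \<Rightarrow> 'a sharp_vert set set" where
  "copyR F = (\<lambda>e. R ` e) ` F"

definition sharp_edges :: "'a set \<Rightarrow> 'a set set \<Rightarrow> nat \<Rightarrow> 'a sharp_vert set set" where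
  "sharp_edges V E m = copyL E \<union> copyR E \<union> (\<Union>v\<in>V. path_edges (sharp_walk m v) m)"

end

theory Submission imports Defs begin

definition qpath :: "nat \<Rightarrow> nat \<Rightarrow> nat \<Rightarrow> ('a \<Rightarrow> nat \<Rightarrow> 'a) \<Rightarrow> ('a \<Rightarrow> nat \<Rightarrow> 'a) \<Rightarrow> 'a \<Rightarrow> nat \<Rightarrow> 'a sharp_vert" where
"qpath k1 m k2 P1 P2 v i = (if i \<le> k1 then L (P1 v (k1 - i)) else if i < k1+m then Mid v (i-k1) else R (P2 v (i-k1-m)))"

lemma path_edges_qpath:
  assumes "P1 v 0 = v" "P2 v 0 = v" "m \<ge> 1"
  shows "path_edges (qpath k1 m k2 P1 P2 v) (k1+m+k2) =
     (\<lambda>e. L`e) ` path_edges (P1 v) k1 \<union> path_edges (sharp_walk m v) m \<union> (\<lambda>e. R`e) ` path_edges (P2 v) k2"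
    (is "path_edges ?Q _ = _")
proof -
  have A: "path_edge ?Q j = L ` path_edge (P1 v) (k1+1-j)" if "j\<in>{1..k1}" for j
    using that by (auto simp: path_edge_def qpath_def Suc_diff_le)
  have B: "path_edge ?Q j = path_edge (sharp_walk m v) (j-k1)" if "j\<in>{k1+1..k1+m}" for j
    using that assms by (auto simp: path_edge_def qpath_def sharp_walk_def)
  have C: "path_edge ?Q j = R ` path_edge (P2 v) (j-k1-m)" if "j\<in>{k1+m+1..k1+m+k2}" for j
    using that assms by (auto simp: path_edge_def qpath_def)
  show ?thesis
  proof (rule set_eqI, rule iffI)
    fix e assume "e \<in> path_edges ?Q (k1+m+k2)"
    then obtain j where j: "j\<in>{1..k1+m+k2}" "e = path_edge ?Q j" by (auto simp: path_edges_def)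
    show "e \<in> (\<lambda>e. L`e) ` path_edges (P1 v) k1 \<union> path_edges (sharp_walk m v) m \<union> (\<lambda>e. R`e) ` path_edges (P2 v) k2"
    proof (cases "j \<le> k1")
      case True
      then have "k1+1-j \<in> {1..k1}" "e = L ` path_edge (P1 v) (k1+1-j)" using A[of j] j by auto
      then have "e \<in> (\<lambda>e. L`e) ` path_edges (P1 v) k1" unfolding path_edges_def by blast
      then show ?thesis by blast
    next
      case False
      show ?thesis
      proof (cases "j \<le> k1+m")
        case True
        then have "j-k1 \<in> {1..m}" "e = path_edge (sharp_walk m v) (j-k1)" using B[of j] j False by auto
        then have "e \<in> path_edges (sharp_walk m v) m" unfolding path_edges_def by blast
        then show ?thesis by blast
      next
        case F2: False
        then have "j-k1-m \<in> {1..k2}" "e = R ` path_edge (P2 v) (j-k1-m)" using C[of j] j False by auto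
        then have "e \<in> (\<lambda>e. R`e) ` path_edges (P2 v) k2" unfolding path_edges_def by blast
        then show ?thesis by blast
      qed
    qed
  next
    fix e assume "e \<in> (\<lambda>e. L`e) ` path_edges (P1 v) k1 \<union> path_edges (sharp_walk m v) m \<union> (\<lambda>e. R`e) ` path_edges (P2 v) k2"
    then consider (a) j where "j\<in>{1..k1}" "e = L ` path_edge (P1 v) j"
      | (b) j where "j\<in>{1..m}" "e = path_edge (sharp_walk m v) j"
      | (c) j where "j\<in>{1..k2}" "e = R ` path_edge (P2 v) j"
      by (auto simp: path_edges_def)
    then show "e \<in> path_edges ?Q (k1+m+k2)"
    proof cases
      case a
      then have "k1+1-j \<in> {1..k1}" by auto
      then have "e = path_edge ?Q (k1+1-j)" using A[of "k1+1-j"] a by auto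
      then show ?thesis using a by (auto simp: path_edges_def intro!: image_eqI[where x="k1+1-j"])
    next
      case b
      then have "e = path_edge ?Q (k1+j)" using B[of "k1+j"] by auto
      then show ?thesis using b by (auto simp: path_edges_def intro!: image_eqI[where x="k1+j"])
    next
      case c
      then have "e = path_edge ?Q (k1+m+j)" using C[of "k1+m+j"] by auto
      then show ?thesis using c by (auto simp: path_edges_def intro!: image_eqI[where x="k1+m+j"])
    qed
  qed
qed

lemma inj_qpath:
  assumes "inj_on (P1 v) {0..k1}" "inj_on (P2 v) {0..k2}"
  shows "inj_on (qpath k1 m k2 P1 P2 v) {0..k1+m+k2}"
proof (rule inj_onI)
  fix i i' assume i: "i \<in> {0..k1+m+k2}" "i' \<in> {0..k1+m+k2}" and eq: "qpath k1 m k2 P1 P2 v i = qpath k1 m k2 P1 P2 v i'"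
  show "i = i'"
  proof (cases "i \<le> k1")
    case True
    then have "i' \<le> k1" using eq by (auto simp: qpath_def split: if_splits)
    then have "P1 v (k1 - i) = P1 v (k1 - i')" using eq True by (auto simp: qpath_def)
    then have "k1 - i = k1 - i'" using assms(1) by (auto dest: inj_onD)
    then show ?thesis using True \<open>i' \<le> k1\<close> by simp
  next
    case False
    then have "\<not> i' \<le> k1" using eq by (auto simp: qpath_def split: if_splits)
    show ?thesis
    proof (cases "i < k1+m")
      case True
      then show ?thesis using eq False \<open>\<not> i' \<le> k1\<close> by (auto simp: qpath_def split: if_splits)
    next
      case F2: False
      then have "\<not> i' < k1+m" using eq False \<open>\<not> i' \<le> k1\<close> by (auto simp: qpath_def split: if_splits)
      then have "P2 v (i-k1-m) = P2 v (i'-k1-m)" using eq F2 False \<open>\<not> i' \<le> k1\<close> by (auto simp: qpath_def)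
      then have "i-k1-m = i'-k1-m" using assms(2) i by (auto dest: inj_onD)
      then show ?thesis using F2 \<open>\<not> i' < k1+m\<close> by simp
    qed
  qed
qed
lemma walk_edge: "x \<in> path_edges (sharp_walk m v) m \<Longrightarrow> \<exists>j. 1\<le>j \<and> j\<le>m \<and> x = {sharp_walk m v (j-1), sharp_walk m v j}"
  by (auto simp: path_edges_def path_edge_def)
lemma sw_owner: "sharp_walk m v j = sharp_walk m v' j' \<Longrightarrow> v = v'"
  by (auto simp: sharp_walk_def split: if_splits)
lemma WW: "x \<in> path_edges (sharp_walk m v) m \<Longrightarrow> x \<in> path_edges (sharp_walk m v') m \<Longrightarrow> v = v'"
proof -
  assume a: "x \<in> path_edges (sharp_walk m v) m" "x \<in> path_edges (sharp_walk m v') m"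
  obtain j where j: "x = {sharp_walk m v (j-1), sharp_walk m v j}" using walk_edge[OF a(1)] by blast
  obtain j' where j': "x = {sharp_walk m v' (j'-1), sharp_walk m v' j'}" using walk_edge[OF a(2)] by blast
  have "sharp_walk m v j \<in> {sharp_walk m v' (j'-1), sharp_walk m v' j'}" using j j' by simp
  then have "sharp_walk m v j = sharp_walk m v' (j'-1) \<or> sharp_walk m v j = sharp_walk m v' j'" by blast
  then show ?thesis using sw_owner[of m v j v' "j'-1"] sw_owner[of m v j v' j'] by blast
qed
lemma sw_notL: "1 \<le> j \<Longrightarrow> sharp_walk m v j \<noteq> L a"
  by (auto simp: sharp_walk_def)

lemma sw_notR: "j < m \<Longrightarrow> sharp_walk m v j \<noteq> R a"
  by (auto simp: sharp_walk_def)

lemma LW: "L ` e \<notin> path_edges (sharp_walk m v) m"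
proof
  assume "L ` e \<in> path_edges (sharp_walk m v) m"
  from walk_edge[OF this] obtain j where j: "1\<le>j" "j\<le>m" "L ` e = {sharp_walk m v (j-1), sharp_walk m v j}" by blast
  then have "sharp_walk m v j \<in> L ` e" by simp
  then obtain a where "sharp_walk m v j = L a" by blast
  then show False using sw_notL[OF j(1), of m v a] by simp
qed

lemma RW: "R ` e \<notin> path_edges (sharp_walk m v) m"
proof
  assume "R ` e \<in> path_edges (sharp_walk m v) m"
  from walk_edge[OF this] obtain j where j: "1\<le>j" "j\<le>m" "R ` e = {sharp_walk m v (j-1), sharp_walk m v j}" by blast
  then have "sharp_walk m v (j-1) \<in> R ` e" by simp
  then obtain a where "sharp_walk m v (j-1) = R a" by blast
  moreover have "j - 1 < m" using j by auto
  ultimately show False using sw_notR[of "j-1" m v a] by simp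
qed

lemma LR: "e \<noteq> {} \<Longrightarrow> L ` e \<noteq> R ` e'"
proof
  assume "e \<noteq> {}" "L ` e = R ` e'"
  then obtain x where "x \<in> e" by blast
  then have "L x \<in> R ` e'" using \<open>L ` e = R ` e'\<close> by blast
  then show False by blast
qed

lemma Linj: "L ` a = L ` b \<longleftrightarrow> a = b"
  by (simp add: inj_image_eq_iff inj_def)
lemma Rinj: "R ` a = R ` b \<longleftrightarrow> a = b"
  by (simp add: inj_image_eq_iff inj_def)

lemma pe_nonempty: "x \<in> path_edges p k \<Longrightarrow> x \<noteq> {}"
  by (auto simp: path_edges_def path_edge_def)


theorem lemma7:
  fixes V :: "'a set" and E E1 E2 :: "'a set set"
    and m k1 k2 :: nat and P1 P2 :: "'a \<Rightarrow> nat \<Rightarrow> 'a"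
  assumes "finite V" and "simple_graph V E" and "m \<ge> 1"
    and "dvop V E k1 P1" and "dvop_edges V k1 P1 \<inter> E1 = {}" and "dvop_edges V k1 P1 \<union> E1 = E"
    and "dvop V E k2 P2" and "dvop_edges V k2 P2 \<inter> E2 = {}" and "dvop_edges V k2 P2 \<union> E2 = E"
  shows "\<exists>(I :: nat set) Q. finite I \<and> card I = card V
    \<and> (\<forall>i\<in>I. path_embedding (sharp_verts V m) (sharp_edges V E m) (k1 + m + k2) (Q i))
    \<and> (\<forall>i\<in>I. \<forall>i'\<in>I. i \<noteq> i' \<longrightarrow>
          path_edges (Q i) (k1 + m + k2) \<inter> path_edges (Q i') (k1 + m + k2) = {})
    \<and> (\<forall>i\<in>I. path_edges (Q i) (k1 + m + k2) \<inter> copyL E1 = {}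
            \<and> path_edges (Q i) (k1 + m + k2) \<inter> copyR E2 = {})
    \<and> copyL E1 \<inter> copyR E2 = {}
    \<and> (\<Union>i\<in>I. path_edges (Q i) (k1 + m + k2)) \<union> copyL E1 \<union> copyR E2 = sharp_edges V E m"
proof -
  let ?K = "k1 + m + k2"
  let ?SV = "sharp_verts V m" and ?SE = "sharp_edges V E m"
  define QQ where "QQ v = qpath k1 m k2 P1 P2 v" for v
  define PE where "PE v = path_edges (QQ v) ?K" for v
  define LE where "LE v = (\<lambda>e. L`e) ` path_edges (P1 v) k1" for v
  define W where "W (v::'a) = path_edges (sharp_walk m v) m" for v
  define RE where "RE v = (\<lambda>e. R`e) ` path_edges (P2 v) k2" for v
  have e1: "path_embedding V E k1 (P1 v)" "P1 v 0 = v" if "v \<in> V" for v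
    using assms(4) that unfolding dvop_def by auto
  have e2: "path_embedding V E k2 (P2 v)" "P2 v 0 = v" if "v \<in> V" for v
    using assms(7) that unfolding dvop_def by auto
  have d1: "v = v'" if h: "v \<in> V" "v' \<in> V" "a \<in> path_edges (P1 v) k1" "a \<in> path_edges (P1 v') k1" for v v' a
  proof -
    obtain j where j: "j \<in> {1..k1}" "a = path_edge (P1 v) j" using h(3) by (auto simp: path_edges_def)
    obtain j' where j': "j' \<in> {1..k1}" "a = path_edge (P1 v') j'" using h(4) by (auto simp: path_edges_def)
    show ?thesis using assms(4) h(1,2) j j' unfolding dvop_def by metis
  qed
  have d2: "v = v'" if h: "v \<in> V" "v' \<in> V" "a \<in> path_edges (P2 v) k2" "a \<in> path_edges (P2 v') k2" for v v' a
  proof -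
    obtain j where j: "j \<in> {1..k2}" "a = path_edge (P2 v) j" using h(3) by (auto simp: path_edges_def)
    obtain j' where j': "j' \<in> {1..k2}" "a = path_edge (P2 v') j'" using h(4) by (auto simp: path_edges_def)
    show ?thesis using assms(7) h(1,2) j j' unfolding dvop_def by metis
  qed
  have sub1: "path_edges (P1 v) k1 \<subseteq> E" if "v \<in> V" for v
    using e1(1)[OF that] by (auto simp: path_embedding_def path_edges_def path_edge_def)
  have sub2: "path_edges (P2 v) k2 \<subseteq> E" if "v \<in> V" for v
    using e2(1)[OF that] by (auto simp: path_embedding_def path_edges_def path_edge_def)
  have ne: "e \<noteq> {}" if "e \<in> E" for e
    using assms(2) that unfolding simple_graph_def by blast
  have PEeq: "PE v = LE v \<union> W v \<union> RE v" if "v \<in> V" for v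
    unfolding PE_def QQ_def LE_def W_def RE_def
    using path_edges_qpath[of P1 v P2 m k1 k2, OF e1(2)[OF that] e2(2)[OF that] assms(3)] by simp
  have PEsub: "PE v \<subseteq> ?SE" if "v \<in> V" for v
  proof -
    have "LE v \<subseteq> copyL E" unfolding LE_def copyL_def using sub1[OF that] by (rule image_mono)
    moreover have "RE v \<subseteq> copyR E" unfolding RE_def copyR_def using sub2[OF that] by (rule image_mono)
    moreover have "W v \<subseteq> (\<Union>v\<in>V. path_edges (sharp_walk m v) m)" using that unfolding W_def by blast
    ultimately show ?thesis unfolding PEeq[OF that] sharp_edges_def by blast
  qed
  have emb: "path_embedding ?SV ?SE ?K (QQ v)" if v: "v \<in> V" for v
    unfolding path_embedding_def
  proof (intro conjI ballI)
    show "inj_on (QQ v) {0..?K}" unfolding QQ_def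
      by (rule inj_qpath) (use e1(1)[OF v] e2(1)[OF v] in \<open>auto simp: path_embedding_def\<close>)
  next
    fix i assume i: "i \<in> {0..?K}"
    show "QQ v i \<in> ?SV"
    proof (cases "i \<le> k1")
      case True
      then have "P1 v (k1 - i) \<in> V" using e1(1)[OF v] by (auto simp: path_embedding_def)
      then show ?thesis using True by (simp add: QQ_def qpath_def sharp_verts_def)
    next
      case False
      show ?thesis
      proof (cases "i < k1 + m")
        case True then show ?thesis using False v by (auto simp: QQ_def qpath_def sharp_verts_def)
      next
        case F2: False
        then have "P2 v (i - k1 - m) \<in> V" using e2(1)[OF v] i by (auto simp: path_embedding_def)
        then show ?thesis using False F2 by (simp add: QQ_def qpath_def sharp_verts_def)
      qed
    qed
  next
    fix j assume j: "j \<in> {1..?K}"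
    have "{QQ v (j - 1), QQ v j} \<in> PE v" unfolding PE_def path_edges_def path_edge_def using j by blast
    then show "{QQ v (j - 1), QQ v j} \<in> ?SE" using PEsub[OF v] by blast
  qed
  have disj: "v = v'" if h: "v \<in> V" "v' \<in> V" "x \<in> PE v" "x \<in> PE v'" for v v' x
  proof -
    have x1: "x \<in> LE v \<or> x \<in> W v \<or> x \<in> RE v" and x2: "x \<in> LE v' \<or> x \<in> W v' \<or> x \<in> RE v'"
      using h PEeq by auto
    show ?thesis
    proof -
      { assume "x \<in> LE v"
        then obtain a where a: "a \<in> path_edges (P1 v) k1" "x = L ` a" unfolding LE_def by blast
        have ?thesis using x2
        proof (elim disjE)
          assume "x \<in> LE v'"
          then obtain b where b: "b \<in> path_edges (P1 v') k1" "x = L ` b" unfolding LE_def by blast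
          then have "a = b" using a Linj by metis
          then show ?thesis using d1 h a b by blast
        next
          assume "x \<in> W v'" then show ?thesis using a LW unfolding W_def by metis
        next
          assume "x \<in> RE v'"
          then obtain b where b: "x = R ` b" unfolding RE_def by blast
          then show ?thesis using a LR pe_nonempty by metis
        qed }
      moreover
      { assume "x \<in> RE v"
        then obtain a where a: "a \<in> path_edges (P2 v) k2" "x = R ` a" unfolding RE_def by blast
        have ?thesis using x2
        proof (elim disjE)
          assume "x \<in> RE v'"
          then obtain b where b: "b \<in> path_edges (P2 v') k2" "x = R ` b" unfolding RE_def by blast
          then have "a = b" using a Rinj by metis
          then show ?thesis using d2 h a b by blast
        next
          assume "x \<in> W v'" then show ?thesis using a RW unfolding W_def by metis
        next
          assume "x \<in> LE v'"
          then obtain b where b: "b \<in> path_edges (P1 v') k1" "x = L ` b" unfolding LE_def by blast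
          then show ?thesis using a LR pe_nonempty by metis
        qed }
      moreover
      { assume w: "x \<in> W v"
        have ?thesis using x2
        proof (elim disjE)
          assume "x \<in> W v'" then show ?thesis using w WW unfolding W_def by metis
        next
          assume "x \<in> LE v'"
          then obtain b where "x = L ` b" unfolding LE_def by blast
          then show ?thesis using w LW[of b m v] unfolding W_def by simp
        next
          assume "x \<in> RE v'"
          then obtain b where "x = R ` b" unfolding RE_def by blast
          then show ?thesis using w RW[of b m v] unfolding W_def by simp
        qed }
      ultimately show ?thesis using x1 by blast
    qed
  qed
  have cL: "PE v \<inter> copyL E1 = {}" if v: "v \<in> V" for v
  proof (rule ccontr)
    assume "PE v \<inter> copyL E1 \<noteq> {}"
    then obtain x e where x: "x \<in> PE v" "e \<in> E1" "x = L ` e" unfolding copyL_def by blast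
    have eE: "e \<in> E" using x(2) assms(6) by blast
    have "x \<in> LE v \<or> x \<in> W v \<or> x \<in> RE v" using x(1) PEeq[OF v] by auto
    then show False
    proof (elim disjE)
      assume "x \<in> LE v"
      then obtain a where a: "a \<in> path_edges (P1 v) k1" "x = L ` a" unfolding LE_def by blast
      then have "a = e" using x Linj by metis
      moreover have "a \<in> dvop_edges V k1 P1" using a v unfolding dvop_edges_def by blast
      ultimately show False using assms(5) x(2) by blast
    next
      assume "x \<in> W v" then show False using x LW unfolding W_def by metis
    next
      assume "x \<in> RE v"
      then obtain a where "x = R ` a" unfolding RE_def by blast
      then show False using x LR ne[OF eE] by metis
    qed
  qed
  have cR: "PE v \<inter> copyR E2 = {}" if v: "v \<in> V" for v
  proof (rule ccontr)
    assume "PE v \<inter> copyR E2 \<noteq> {}"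
    then obtain x e where x: "x \<in> PE v" "e \<in> E2" "x = R ` e" unfolding copyR_def by blast
    have eE: "e \<in> E" using x(2) assms(9) by blast
    have "x \<in> LE v \<or> x \<in> W v \<or> x \<in> RE v" using x(1) PEeq[OF v] by auto
    then show False
    proof (elim disjE)
      assume "x \<in> RE v"
      then obtain a where a: "a \<in> path_edges (P2 v) k2" "x = R ` a" unfolding RE_def by blast
      then have "a = e" using x Rinj by metis
      moreover have "a \<in> dvop_edges V k2 P2" using a v unfolding dvop_edges_def by blast
      ultimately show False using assms(8) x(2) by blast
    next
      assume "x \<in> W v" then show False using x RW unfolding W_def by metis
    next
      assume "x \<in> LE v"
      then obtain a where a: "a \<in> path_edges (P1 v) k1" "x = L ` a" unfolding LE_def by blast
      then show False using x LR pe_nonempty by metis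
    qed
  qed
  have cLR: "copyL E1 \<inter> copyR E2 = {}"
  proof (rule ccontr)
    assume "copyL E1 \<inter> copyR E2 \<noteq> {}"
    then obtain e e' where "e \<in> E1" "L ` e = R ` e'" unfolding copyL_def copyR_def by blast
    moreover have "e \<in> E" using \<open>e \<in> E1\<close> assms(6) by blast
    ultimately show False using LR ne by metis
  qed
  have un: "(\<Union>v\<in>V. PE v) \<union> copyL E1 \<union> copyR E2 = ?SE"
  proof
    show "(\<Union>v\<in>V. PE v) \<union> copyL E1 \<union> copyR E2 \<subseteq> ?SE"
      using PEsub assms(6,9) unfolding sharp_edges_def copyL_def copyR_def by blast
  next
    have "copyL E \<subseteq> (\<Union>v\<in>V. PE v) \<union> copyL E1"
    proof
      fix x assume "x \<in> copyL E"
      then obtain e where e: "e \<in> E" "x = L ` e" unfolding copyL_def by blast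
      show "x \<in> (\<Union>v\<in>V. PE v) \<union> copyL E1"
      proof (cases "e \<in> E1")
        case True then show ?thesis using e unfolding copyL_def by blast
      next
        case False
        then have "e \<in> dvop_edges V k1 P1" using e assms(6) by blast
        then obtain v where "v \<in> V" "e \<in> path_edges (P1 v) k1" unfolding dvop_edges_def by blast
        then show ?thesis using e PEeq unfolding LE_def by blast
      qed
    qed
    moreover have "copyR E \<subseteq> (\<Union>v\<in>V. PE v) \<union> copyR E2"
    proof
      fix x assume "x \<in> copyR E"
      then obtain e where e: "e \<in> E" "x = R ` e" unfolding copyR_def by blast
      show "x \<in> (\<Union>v\<in>V. PE v) \<union> copyR E2"
      proof (cases "e \<in> E2")
        case True then show ?thesis using e unfolding copyR_def by blast
      next
        case False
        then have "e \<in> dvop_edges V k2 P2" using e assms(9) by blast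
        then obtain v where "v \<in> V" "e \<in> path_edges (P2 v) k2" unfolding dvop_edges_def by blast
        then show ?thesis using e PEeq unfolding RE_def by blast
      qed
    qed
    moreover have "(\<Union>v\<in>V. W v) \<subseteq> (\<Union>v\<in>V. PE v)" using PEeq by blast
    ultimately show "?SE \<subseteq> (\<Union>v\<in>V. PE v) \<union> copyL E1 \<union> copyR E2"
      unfolding sharp_edges_def W_def by blast
  qed
  obtain f where f: "bij_betw f {0..<card V} V" using ex_bij_betw_nat_finite[OF assms(1)] by blast
  have fV: "f i \<in> V" if "i \<in> {0..<card V}" for i using f that bij_betwE by blast
  have finj: "f i \<noteq> f i'" if "i \<in> {0..<card V}" "i' \<in> {0..<card V}" "i \<noteq> i'" for i i'
    using f that unfolding bij_betw_def inj_on_def by blast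
  have U: "(\<Union>i\<in>{0..<card V}. PE (f i)) = (\<Union>v\<in>V. PE v)"
  proof -
    have "f ` {0..<card V} = V" using f unfolding bij_betw_def by blast
    moreover have "(\<Union>v\<in>f`{0..<card V}. PE v) = (\<Union>i\<in>{0..<card V}. PE (f i))" by (simp add: image_image)
    ultimately show ?thesis by simp
  qed
  show ?thesis
  proof (intro exI[of _ "{0..<card V}"] exI[of _ "\<lambda>i. QQ (f i)"] conjI ballI impI)
    show "finite {0..<card V}" by simp
    show "card {0..<card V} = card V" by simp
    show "copyL E1 \<inter> copyR E2 = {}" by (rule cLR)
  next
    fix i assume "i \<in> {0..<card V}"
    then show "path_embedding ?SV ?SE ?K (QQ (f i))" using emb fV by blast
  next
    fix i i' assume "i \<in> {0..<card V}" "i' \<in> {0..<card V}" "i \<noteq> i'"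
    then show "path_edges (QQ (f i)) ?K \<inter> path_edges (QQ (f i')) ?K = {}"
      using disj[of "f i" "f i'"] fV finj unfolding PE_def by blast
  next
    fix i assume "i \<in> {0..<card V}"
    then show "path_edges (QQ (f i)) ?K \<inter> copyL E1 = {}" "path_edges (QQ (f i)) ?K \<inter> copyR E2 = {}"
      using cL cR fV unfolding PE_def by auto
  next
    show "(\<Union>i\<in>{0..<card V}. path_edges (QQ (f i)) ?K) \<union> copyL E1 \<union> copyR E2 = ?SE"
      using un U unfolding PE_def by simp
  qed
qed

end
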